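(* 1. Let $a\in(0,1/2)$. For $v>v_0=(2-a)/a$ we have $T_0(v,a)<+\infty$, and moreover $T_0(v,a)\to\max(\sqrt2(1-2a),0)$ as $v\to+\infty$. 2. If $v\in\bigcup_{(p,q)\in\mathbb{N}\times\mathbb{N}}\sqrt{p^2+q^2}\,\mathbb{Q}$, then there exists $a_0>0$ such that $T_0(v,a)=+\infty$ for all $a\in(0,a_0)$.
   Context: $\Omega=(0,1)^2\subset\mathbb{R}^2$ (Euclidean), wave equation with Dirichlet boundary condition. For $a\in(0,1)$ and $v\ge0$, let $t\mapsto(x(t),y(t))$ be the path starting at $(0,0)$ at $t=0$ and moving anticlockwise along the boundary of $[0,1]^2$ with constant speed $v$. Set $\tilde\omega(t)=(x(t)-a,x(t)+a)\times(y(t)-a,y(t)+a)$, $\omega(t)=\tilde\omega(t)\cap[0,1]^2$, $Q=\{(t,z):z\in\omega(t)\}$. Let $\tau(s)$ denote the distance from $s\in\mathbb{R}$ to $2\mathbb{Z}$ (the 2-periodic triangle wave with values in $[0,1]$). Rays are the curves $t\mapsto(\tau(x_0+(t-t_0)\cos\alpha),\ \tau(y_0+(t-t_0)\sin\alpha))$, $t\in\mathbb{R}$, for $(x_0,y_0)\in[0,1]^2$, $t_0\in\mathbb{R}$, $\alpha\in(-\pi,\pi]$ (unit-speed billiard trajectories in the square). $(Q,T)$ satisfies the time-dependent geometric control condition if every ray $z(\cdot)$ admits $t\in(0,T)$ with $z(t)\in\omega(t)$; $T_0(v,a)$ is the infimum of such $T>0$, $+\infty$ if none. *)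

theory Defs
  imports "HOL-Analysis.Analysis"
begin

text \<open>Point at arclength s along the boundary of [0,1]^2, starting at (0,0), anticlockwise
  (perimeter 4, taken periodically).\<close>
definition bdry_point :: "real \<Rightarrow> real \<times> real" where
  "bdry_point s = (let r = s - 4 * of_int \<lfloor>s / 4\<rfloor> in
     if r < 1 then (r, 0)
     else if r < 2 then (1, r - 1)
     else if r < 3 then (3 - r, 1)
     else (0, 4 - r))"

definition ctrl_path :: "real \<Rightarrow> real \<Rightarrow> real \<times> real" where
  "ctrl_path v t = bdry_point (v * t)"

definition omega :: "real \<Rightarrow> real \<Rightarrow> real \<Rightarrow> (real \<times> real) set" where
  "omega v a t = {z. \<bar>fst z - fst (ctrl_path v t)\<bar> < a \<and> \<bar>snd z - snd (ctrl_path v t)\<bar> < a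
                    \<and> 0 \<le> fst z \<and> fst z \<le> 1 \<and> 0 \<le> snd z \<and> snd z \<le> 1}"

definition tri :: "real \<Rightarrow> real" where
  "tri s = infdist s {2 * real_of_int k | k. True}"

definition ray :: "real \<Rightarrow> real \<Rightarrow> real \<Rightarrow> real \<Rightarrow> real \<Rightarrow> real \<times> real" where
  "ray x0 y0 t0 \<alpha> t = (tri (x0 + (t - t0) * cos \<alpha>), tri (y0 + (t - t0) * sin \<alpha>))"

definition tGCC :: "real \<Rightarrow> real \<Rightarrow> real \<Rightarrow> bool" where
  "tGCC v a T \<longleftrightarrow>
     (\<forall>x0 y0 t0 \<alpha>. 0 \<le> x0 \<and> x0 \<le> 1 \<and> 0 \<le> y0 \<and> y0 \<le> 1 \<and> -pi < \<alpha> \<and> \<alpha> \<le> pi \<longrightarrow>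
        (\<exists>t. 0 < t \<and> t < T \<and> ray x0 y0 t0 \<alpha> t \<in> omega v a t))"

text \<open>T_0(v,a): infimum of admissible T > 0, +infinity if none (Inf of empty ereal set).\<close>
definition T0 :: "real \<Rightarrow> real \<Rightarrow> ereal" where
  "T0 v a = Inf (ereal ` {T. 0 < T \<and> tGCC v a T})"

end

theory Submission
  imports Defs
begin


lemma tri_le: "tri s \<le> \<bar>s - 2 * real_of_int k\<bar>"
  unfolding tri_def
  by (rule infdist_le2[where a="2 * real_of_int k"]) (auto simp: dist_real_def)

lemma tri_ge: assumes "\<And>k::int. d \<le> \<bar>s - 2 * real_of_int k\<bar>" shows "d \<le> tri s"
proof -
  have ne: "{2 * real_of_int k | k. True} \<noteq> {}" by auto
  show ?thesis unfolding tri_def infdist_notempty[OF ne]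
    by (rule cINF_greatest[OF ne]) (auto simp: dist_real_def assms)
qed

lemma tri_eq: assumes "\<bar>w\<bar> \<le> 1" shows "tri (2 * real_of_int k + w) = \<bar>w\<bar>"
proof (rule antisym)
  show "tri (2 * real_of_int k + w) \<le> \<bar>w\<bar>" using tri_le[of "2 * real_of_int k + w" k] by simp
  show "\<bar>w\<bar> \<le> tri (2 * real_of_int k + w)"
  proof (rule tri_ge)
    fix m :: int
    show "\<bar>w\<bar> \<le> \<bar>2 * real_of_int k + w - 2 * real_of_int m\<bar>"
    proof (cases "k = m")
      case False
      then have "\<bar>real_of_int (k - m)\<bar> \<ge> 1" by linarith
      then show ?thesis using assms by arith
    qed simp
  qed
qed

lemma tri_decomp: obtains k :: int and w where "s = 2 * real_of_int k + w" "-1 \<le> w" "w < 1" "tri s = \<bar>w\<bar>"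
proof -
  define k where "k = \<lfloor>(s + 1) / 2\<rfloor>"
  have "real_of_int k \<le> (s+1)/2" "(s+1)/2 < real_of_int k + 1" unfolding k_def by linarith+
  then have h: "-1 \<le> s - 2 * real_of_int k" "s - 2 * real_of_int k < 1" by auto
  have "tri s = \<bar>s - 2 * real_of_int k\<bar>" using tri_eq[of "s - 2 * real_of_int k" k] h by simp
  then show ?thesis using that[of k "s - 2 * real_of_int k"] h by simp
qed

lemma tri_nonneg: "0 \<le> tri s" unfolding tri_def by (rule infdist_nonneg)
lemma tri_le1: "tri s \<le> 1" by (rule tri_decomp[of s]) auto

lemma tri_lip: "\<bar>tri s - tri u\<bar> \<le> \<bar>s - u\<bar>"
  unfolding tri_def using infdist_triangle_abs[of s _ u] by (simp add: dist_real_def)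

lemma continuous_on_tri: "continuous_on S tri"
  unfolding tri_def by (intro continuous_intros)

lemma tri_01_int: assumes "tri s = 0 \<or> tri s = 1" shows "s \<in> \<int>"
proof (rule tri_decomp[of s])
  fix k :: int and w assume h: "s = 2 * real_of_int k + w" "-1 \<le> w" "w < 1" "tri s = \<bar>w\<bar>"
  then have "w = 0 \<or> w = -1" using assms by (auto simp: abs_if split: if_splits)
  then show ?thesis
  proof
    assume "w = 0" then have "s = real_of_int (2*k)" using h by simp
    then show ?thesis by (metis Ints_of_int)
  next
    assume "w = -1" then have "s = real_of_int (2*k - 1)" using h by simp
    then show ?thesis by (metis Ints_of_int)
  qed
qed

lemma tri_rat: assumes "s \<in> \<rat>" shows "tri s \<in> \<rat>"
proof (rule tri_decomp[of s])
  fix k :: int and w assume h: "s = 2 * real_of_int k + w" "-1 \<le> w" "w < 1" "tri s = \<bar>w\<bar>"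
  have "w = s - 2 * real_of_int k" using h by simp
  then have "w \<in> \<rat>" using assms by (simp add: Rats_diff Rats_mult)
  then show ?thesis using h by (simp add: Rats_abs_iff)
qed

lemma tri_even: assumes "n = 2 * k" "real_of_int n \<le> u" "u \<le> real_of_int n + 1"
  shows "tri u = u - real_of_int n"
  using tri_eq[of "u - real_of_int n" k] assms by simp

lemma tri_odd: assumes "n = 2 * k - 1" "real_of_int n \<le> u" "u \<le> real_of_int n + 1"
  shows "tri u = real_of_int n + 1 - u"
  using tri_eq[of "u - real_of_int n - 1" k] assms by simp



lemma bdry_period: "bdry_point (s + 4 * real_of_int m) = bdry_point s"
proof -
  have "\<lfloor>(s + 4 * real_of_int m) / 4\<rfloor> = \<lfloor>s/4\<rfloor> + m"
    by (metis add_divide_distrib floor_add_int nonzero_mult_div_cancel_left zero_neq_numeral)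
  then show ?thesis unfolding bdry_point_def Let_def by simp
qed

lemma bdry_base: assumes "0 \<le> r" "r < 4"
  shows "bdry_point r = (if r < 1 then (r, 0) else if r < 2 then (1, r - 1) else if r < 3 then (3 - r, 1) else (0, 4 - r))"
proof -
  have "\<lfloor>r / 4\<rfloor> = 0" using assms by (simp add: floor_eq_iff)
  then show ?thesis unfolding bdry_point_def Let_def by simp
qed

lemma bdry_red: assumes "0 \<le> r" "r < 4"
  shows "bdry_point (r + 4 * real_of_int m) = (if r < 1 then (r, 0) else if r < 2 then (1, r - 1) else if r < 3 then (3 - r, 1) else (0, 4 - r))"
  using bdry_period bdry_base[OF assms] by simp

lemma bdry_decomp: obtains r m where "0 \<le> r" "r < 4" "s = r + 4 * real_of_int m"
proof -
  define m where "m = \<lfloor>s/4\<rfloor>"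
  have "real_of_int m \<le> s/4" "s/4 < real_of_int m + 1" unfolding m_def by linarith+
  then show ?thesis using that[of "s - 4 * real_of_int m" m] by auto
qed

lemma bdry_side: "fst (bdry_point s) \<in> {0,1} \<or> snd (bdry_point s) \<in> {0,1}"
  by (rule bdry_decomp[of s]) (auto simp: bdry_red)

lemma bdry_range: "0 \<le> fst (bdry_point s) \<and> fst (bdry_point s) \<le> 1 \<and> 0 \<le> snd (bdry_point s) \<and> snd (bdry_point s) \<le> 1"
  by (rule bdry_decomp[of s]) (auto simp: bdry_red)

definition near :: "real \<Rightarrow> real \<times> real \<Rightarrow> real \<Rightarrow> bool" where
  "near a z s \<longleftrightarrow> \<bar>fst z - fst (bdry_point s)\<bar> < a \<and> \<bar>snd z - snd (bdry_point s)\<bar> < a"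

lemma near_bottom:
  assumes "0 < a" "a < 1/2" "0 \<le> X" "X \<le> 1" "0 \<le> Y" "Y < a" "\<bar>e\<bar> < a" "s = X + e + 4 * real_of_int j"
  shows "near a (X, Y) s"
proof -
  consider "X + e < 0" | "0 \<le> X + e" "X + e < 1" | "1 \<le> X + e" by linarith
  then show ?thesis
  proof cases
    case 1
    have eq: "s = (X + e + 4) + 4 * real_of_int (j - 1)" using assms by simp
    have "bdry_point s = (0, 4 - (X + e + 4))" unfolding eq using 1 assms by (subst bdry_red) auto
    then show ?thesis using 1 assms by (simp add: near_def)
  next
    case 2
    then show ?thesis using assms by (simp add: near_def bdry_red)
  next
    case 3
    then show ?thesis using assms by (simp add: near_def bdry_red)
  qed
qed

lemma near_right:
  assumes "0 < a" "a < 1/2" "1 - a < X" "X \<le> 1" "0 \<le> Y" "Y \<le> 1" "\<bar>e\<bar> < a" "s = 1 + Y + e + 4 * real_of_int j"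
  shows "near a (X, Y) s"
proof -
  consider "1 + Y + e < 1" | "1 \<le> 1 + Y + e" "1 + Y + e < 2" | "2 \<le> 1 + Y + e" by linarith
  then show ?thesis
  proof cases
    case 1
    then show ?thesis using assms by (simp add: near_def bdry_red)
  next
    case 2
    then show ?thesis using assms by (simp add: near_def bdry_red)
  next
    case 3
    then show ?thesis using assms by (simp add: near_def bdry_red)
  qed
qed

lemma near_top:
  assumes "0 < a" "a < 1/2" "0 \<le> X" "X \<le> 1" "1 - a < Y" "Y \<le> 1" "\<bar>e\<bar> < a" "s = 3 - X + e + 4 * real_of_int j"
  shows "near a (X, Y) s"
proof -
  consider "3 - X + e < 2" | "2 \<le> 3 - X + e" "3 - X + e < 3" | "3 \<le> 3 - X + e" by linarith
  then show ?thesis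
  proof cases
    case 1
    then show ?thesis using assms by (simp add: near_def bdry_red)
  next
    case 2
    then show ?thesis using assms by (simp add: near_def bdry_red)
  next
    case 3
    then show ?thesis using assms by (simp add: near_def bdry_red)
  qed
qed

lemma near_left:
  assumes "0 < a" "a < 1/2" "0 \<le> X" "X < a" "0 \<le> Y" "Y \<le> 1" "\<bar>e\<bar> < a" "s = 4 - Y + e + 4 * real_of_int j"
  shows "near a (X, Y) s"
proof -
  consider "4 - Y + e < 3" | "3 \<le> 4 - Y + e" "4 - Y + e < 4" | "4 \<le> 4 - Y + e" by linarith
  then show ?thesis
  proof cases
    case 1
    then show ?thesis using assms by (simp add: near_def bdry_red)
  next
    case 2
    then show ?thesis using assms by (simp add: near_def bdry_red)
  next
    case 3
    have eq: "s = (- Y + e) + 4 * real_of_int (j + 1)" using assms by simp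
    have "bdry_point s = (- Y + e, 0)" unfolding eq using 3 assms by (subst bdry_red) auto
    then show ?thesis using 3 assms by (simp add: near_def)
  qed
qed



lemma hit_interval:
  fixes g :: "real \<Rightarrow> real"
  assumes "lo < hi" "continuous_on {lo..hi} g" "g hi - g lo > 4 - 2 * a" "0 < a" "a \<le> 1"
  shows "\<exists>t. lo < t \<and> t < hi \<and> (\<exists>j::int. \<bar>g t - 4 * real_of_int j\<bar> < a)"
proof -
  define n where "n = \<lceil>(g lo + a) / 4\<rceil>"
  have n1: "(g lo + a) / 4 \<le> real_of_int n" "real_of_int n < (g lo + a) / 4 + 1" unfolding n_def by linarith+
  obtain \<tau> j where tau: "g lo < \<tau>" "\<tau> < g hi" "\<bar>\<tau> - 4 * real_of_int j\<bar> < a"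
  proof (cases "4 * real_of_int n - a < g hi")
    case True
    define m where "m = min (g hi) (4 * real_of_int n + a)"
    have m: "m \<le> g hi" "m \<le> 4 * real_of_int n + a" "4 * real_of_int n - a < m"
      unfolding m_def using True assms by auto
    have "g lo < (4 * real_of_int n - a + m) / 2" using m n1 by argo
    moreover have "(4 * real_of_int n - a + m) / 2 < g hi" using m by argo
    moreover have "\<bar>(4 * real_of_int n - a + m) / 2 - 4 * real_of_int n\<bar> < a" using m by argo
    ultimately show ?thesis by (rule that)
  next
    case False
    define m where "m = min (g hi) (4 * real_of_int n - 4 + a)"
    have m: "m \<le> g hi" "m \<le> 4 * real_of_int n - 4 + a" "g lo < m"
      unfolding m_def using False assms n1 by auto
    have "g lo < (g lo + m) / 2" using m by argo
    moreover have "(g lo + m) / 2 < g hi" using m assms by argo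
    moreover have "\<bar>(g lo + m) / 2 - 4 * real_of_int (n - 1)\<bar> < a" using m n1 assms of_int_diff[of n 1] by simp argo
    ultimately show ?thesis by (rule that)
  qed
  obtain t where t: "lo \<le> t" "t \<le> hi" "g t = \<tau>"
    using IVT'[of g lo \<tau> hi] tau assms by auto
  have "t \<noteq> lo" "t \<noteq> hi" using t tau by auto
  then show ?thesis using t tau by (intro exI[of _ t]) auto
qed

lemma near_omega: "near a (tri u, tri w) (v * t) \<Longrightarrow> (tri u, tri w) \<in> omega v a t"
  unfolding near_def omega_def ctrl_path_def using tri_nonneg tri_le1 by auto

lemma side_hit:
  fixes X Y :: "real \<Rightarrow> real"
  assumes a: "0 < a" "a < 1/2" and lohi: "lo < hi"
    and cX: "continuous_on {lo..hi} X" and cY: "continuous_on {lo..hi} Y"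
    and r01: "\<And>t. 0 \<le> X t \<and> X t \<le> 1 \<and> 0 \<le> Y t \<and> Y t \<le> 1"
    and side: "((\<forall>t. lo < t \<and> t < hi \<longrightarrow> Y t < a) \<and> v * (hi - lo) - (X hi - X lo) > 4 - 2*a)
             \<or> ((\<forall>t. lo < t \<and> t < hi \<longrightarrow> X t > 1 - a) \<and> v * (hi - lo) - (Y hi - Y lo) > 4 - 2*a)
             \<or> ((\<forall>t. lo < t \<and> t < hi \<longrightarrow> Y t > 1 - a) \<and> v * (hi - lo) + (X hi - X lo) > 4 - 2*a)
             \<or> ((\<forall>t. lo < t \<and> t < hi \<longrightarrow> X t < a) \<and> v * (hi - lo) + (Y hi - Y lo) > 4 - 2*a)"
  shows "\<exists>t. lo < t \<and> t < hi \<and> near a (X t, Y t) (v * t)"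
  using side
proof (elim disjE conjE)
  assume h: "\<forall>t. lo < t \<and> t < hi \<longrightarrow> Y t < a" "v * (hi - lo) - (X hi - X lo) > 4 - 2*a"
  have "continuous_on {lo..hi} (\<lambda>t. v * t - X t)" by (intro continuous_intros cX)
  then obtain t j where t: "lo < t" "t < hi" "\<bar>v * t - X t - 4 * real_of_int j\<bar> < a"
    using hit_interval[of lo hi "\<lambda>t. v * t - X t" a] h lohi a by (auto simp: algebra_simps)
  have "near a (X t, Y t) (v * t)"
    by (rule near_bottom[where e="v * t - X t - 4 * real_of_int j" and j=j]) (use a r01 h t in auto)
  then show ?thesis using t by blast
next
  assume h: "\<forall>t. lo < t \<and> t < hi \<longrightarrow> X t > 1 - a" "v * (hi - lo) - (Y hi - Y lo) > 4 - 2*a"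
  have "continuous_on {lo..hi} (\<lambda>t. v * t - (1 + Y t))" by (intro continuous_intros cY)
  then obtain t j where t: "lo < t" "t < hi" "\<bar>v * t - (1 + Y t) - 4 * real_of_int j\<bar> < a"
    using hit_interval[of lo hi "\<lambda>t. v * t - (1 + Y t)" a] h lohi a by (auto simp: algebra_simps)
  have "near a (X t, Y t) (v * t)"
    by (rule near_right[where e="v * t - (1 + Y t) - 4 * real_of_int j" and j=j]) (use a r01 h t in auto)
  then show ?thesis using t by blast
next
  assume h: "\<forall>t. lo < t \<and> t < hi \<longrightarrow> Y t > 1 - a" "v * (hi - lo) + (X hi - X lo) > 4 - 2*a"
  have "continuous_on {lo..hi} (\<lambda>t. v * t - (3 - X t))" by (intro continuous_intros cX)
  then obtain t j where t: "lo < t" "t < hi" "\<bar>v * t - (3 - X t) - 4 * real_of_int j\<bar> < a"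
    using hit_interval[of lo hi "\<lambda>t. v * t - (3 - X t)" a] h lohi a by (auto simp: algebra_simps)
  have "near a (X t, Y t) (v * t)"
    by (rule near_top[where e="v * t - (3 - X t) - 4 * real_of_int j" and j=j]) (use a r01 h t in auto)
  then show ?thesis using t by blast
next
  assume h: "\<forall>t. lo < t \<and> t < hi \<longrightarrow> X t < a" "v * (hi - lo) + (Y hi - Y lo) > 4 - 2*a"
  have "continuous_on {lo..hi} (\<lambda>t. v * t - (4 - Y t))" by (intro continuous_intros cY)
  then obtain t j where t: "lo < t" "t < hi" "\<bar>v * t - (4 - Y t) - 4 * real_of_int j\<bar> < a"
    using hit_interval[of lo hi "\<lambda>t. v * t - (4 - Y t)" a] h lohi a by (auto simp: algebra_simps)
  have "near a (X t, Y t) (v * t)"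
    by (rule near_left[where e="v * t - (4 - Y t) - 4 * real_of_int j" and j=j]) (use a r01 h t in auto)
  then show ?thesis using t by blast
qed



lemma wall_time:
  assumes "s \<noteq> 0"
  shows "\<exists>ts k. A \<le> ts \<and> ts \<le> A + 2 / \<bar>s\<bar> \<and> u0 + (ts - t0) * s = 2 * real_of_int k"
proof -
  define f where "f t = u0 + (t - t0) * s" for t
  have cf: "continuous_on {A..A + 2/\<bar>s\<bar>} f" unfolding f_def by (intro continuous_intros)
  have le: "A \<le> A + 2/\<bar>s\<bar>" by simp
  show ?thesis
  proof (cases "s > 0")
    case True
    have fB: "f (A + 2/\<bar>s\<bar>) = f A + 2" unfolding f_def using True by (simp add: field_simps)
    define k where "k = \<lceil>f A / 2\<rceil>"
    have "f A / 2 \<le> real_of_int k" "real_of_int k < f A / 2 + 1" unfolding k_def by linarith+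
    then have "f A \<le> 2 * real_of_int k" "2 * real_of_int k \<le> f (A + 2/\<bar>s\<bar>)" using fB by (simp_all add: field_simps)
    then obtain ts where "A \<le> ts" "ts \<le> A + 2/\<bar>s\<bar>" "f ts = 2 * real_of_int k"
      using IVT'[OF _ _ le cf] by blast
    then show ?thesis unfolding f_def by blast
  next
    case False
    then have sn: "s < 0" using assms by simp
    have fB: "f (A + 2/\<bar>s\<bar>) = f A - 2" unfolding f_def using sn by (simp add: field_simps)
    define k where "k = \<lfloor>f A / 2\<rfloor>"
    have "real_of_int k \<le> f A / 2" "f A / 2 < real_of_int k + 1" unfolding k_def by linarith+
    then have "2 * real_of_int k \<le> f A" "f (A + 2/\<bar>s\<bar>) \<le> 2 * real_of_int k" using fB by (simp_all add: field_simps)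
    then obtain ts where "A \<le> ts" "ts \<le> A + 2/\<bar>s\<bar>" "f ts = 2 * real_of_int k"
      using IVT2'[OF _ _ le cf] by blast
    then show ?thesis unfolding f_def by blast
  qed
qed

lemma wall_generic:
  assumes s: "s \<noteq> 0" "\<delta> \<le> \<bar>s\<bar>" "0 < \<delta>" and a: "0 < a" "a < 1"
  shows "\<exists>lo hi. 1 \<le> lo \<and> lo < hi \<and> hi \<le> 1 + (2*a+2)/\<delta> \<and> hi - lo = 2*a/\<bar>s\<bar>
     \<and> (\<forall>t. lo < t \<and> t < hi \<longrightarrow> tri (u0 + (t - t0) * s) < a)
     \<and> \<bar>tri (w0 + (hi - t0) * c) - tri (w0 + (lo - t0) * c)\<bar> \<le> \<bar>c\<bar> * (hi - lo)"
proof -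
  have sp: "0 < \<bar>s\<bar>" using s by simp
  obtain ts k where ts: "1 + a/\<bar>s\<bar> \<le> ts" "ts \<le> 1 + a/\<bar>s\<bar> + 2/\<bar>s\<bar>" "u0 + (ts - t0) * s = 2 * real_of_int k"
    using wall_time[OF s(1), of "1 + a/\<bar>s\<bar>" u0 t0] by blast
  define lo where "lo = ts - a/\<bar>s\<bar>"
  define hi where "hi = ts + a/\<bar>s\<bar>"
  have as: "0 < a/\<bar>s\<bar>" using a sp by simp
  have 1: "1 \<le> lo" using ts unfolding lo_def by simp
  have 2: "lo < hi" using as unfolding lo_def hi_def by simp
  have "(2*a+2)/\<bar>s\<bar> \<le> (2*a+2)/\<delta>" using s a by (intro divide_left_mono) auto
  moreover have "hi \<le> 1 + (2*a+2)/\<bar>s\<bar>" using ts unfolding hi_def by (simp add: add_divide_distrib)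
  ultimately have 3: "hi \<le> 1 + (2*a+2)/\<delta>" by simp
  have 4: "hi - lo = 2*a/\<bar>s\<bar>" unfolding hi_def lo_def by simp
  have 5: "tri (u0 + (t - t0) * s) < a" if "lo < t" "t < hi" for t
  proof -
    have "\<bar>t - ts\<bar> < a/\<bar>s\<bar>" using that unfolding lo_def hi_def by auto
    then have "\<bar>t - ts\<bar> * \<bar>s\<bar> < a" using sp by (simp add: pos_less_divide_eq)
    then have w: "\<bar>(t - ts) * s\<bar> < a" by (simp add: abs_mult)
    have "u0 + (t - t0) * s = 2 * real_of_int k + (t - ts) * s" using ts(3) by (simp add: algebra_simps)
    then show ?thesis using tri_eq[of "(t - ts) * s" k] w a by simp
  qed
  have 6: "\<bar>tri (w0 + (hi - t0) * c) - tri (w0 + (lo - t0) * c)\<bar> \<le> \<bar>c\<bar> * (hi - lo)"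
  proof -
    have "\<bar>tri (w0 + (hi - t0) * c) - tri (w0 + (lo - t0) * c)\<bar> \<le> \<bar>(w0 + (hi - t0) * c) - (w0 + (lo - t0) * c)\<bar>"
      by (rule tri_lip)
    also have "(w0 + (hi - t0) * c) - (w0 + (lo - t0) * c) = (hi - lo) * c" by (simp add: algebra_simps)
    also have "\<bar>(hi - lo) * c\<bar> = \<bar>c\<bar> * (hi - lo)" using 2 by (simp add: abs_mult)
    finally show ?thesis .
  qed
  show ?thesis using 1 2 3 4 5 6 by blast
qed

lemma ray_hit:
  assumes a: "0 < a" "a < 1/2" and l: "0 \<le> lo" "lo < hi" "hi \<le> T"
    and side: "((\<forall>t. lo < t \<and> t < hi \<longrightarrow> Y t < a) \<and> v * (hi - lo) - (X hi - X lo) > 4 - 2*a)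
             \<or> ((\<forall>t. lo < t \<and> t < hi \<longrightarrow> X t > 1 - a) \<and> v * (hi - lo) - (Y hi - Y lo) > 4 - 2*a)
             \<or> ((\<forall>t. lo < t \<and> t < hi \<longrightarrow> Y t > 1 - a) \<and> v * (hi - lo) + (X hi - X lo) > 4 - 2*a)
             \<or> ((\<forall>t. lo < t \<and> t < hi \<longrightarrow> X t < a) \<and> v * (hi - lo) + (Y hi - Y lo) > 4 - 2*a)"
    and XY: "X = (\<lambda>t. tri (x0 + (t - t0) * cos \<alpha>))" "Y = (\<lambda>t. tri (y0 + (t - t0) * sin \<alpha>))"
  shows "\<exists>t. 0 < t \<and> t < T \<and> ray x0 y0 t0 \<alpha> t \<in> omega v a t"
proof -
  have cX: "continuous_on {lo..hi} X" unfolding XY tri_def by (intro continuous_intros)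
  have cY: "continuous_on {lo..hi} Y" unfolding XY tri_def by (intro continuous_intros)
  have r01: "0 \<le> X t \<and> X t \<le> 1 \<and> 0 \<le> Y t \<and> Y t \<le> 1" for t unfolding XY using tri_nonneg tri_le1 by auto
  obtain t where t: "lo < t" "t < hi" "near a (X t, Y t) (v * t)"
    using side_hit[OF a l(2) cX cY r01 side] by blast
  have "ray x0 y0 t0 \<alpha> t \<in> omega v a t" using near_omega t(3) unfolding XY ray_def by simp
  then show ?thesis using t l by (intro exI[of _ t]) auto
qed

lemma ineq_cs:
  fixes c s v :: real
  assumes "0 \<le> c" "c \<le> s" "c^2 + s^2 = 1" "3 \<le> v"
  shows "v * c \<le> v - s"
proof -
  have "c^2 \<le> s^2" using assms power_mono[of c s 2] by simp
  then have "c^2 \<le> 1/2" using assms(3) by linarith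
  then have "c^2 \<le> (4/5)^2" by (simp add: power2_eq_square)
  then have c45: "c \<le> 4/5" by (rule power2_le_imp_le) simp
  have "(5*c - 4) * (c - 1) \<ge> 0" using c45 assms by (intro mult_nonpos_nonpos) auto
  then have "s^2 \<le> (3 - 3*c)^2" using assms by (simp add: power2_eq_square algebra_simps)
  then have "s \<le> 3 - 3*c" by (rule power2_le_imp_le) (use c45 in simp)
  moreover have "3 * (1 - c) \<le> v * (1 - c)" by (rule mult_right_mono) (use assms c45 in simp_all)
  then have "3 - 3 * c \<le> v - v * c" by (simp add: algebra_simps)
  ultimately show ?thesis by linarith
qed



lemma bottom_case:
  assumes a: "0 < a" "a < 1/2" and d: "0 < \<delta>" "\<delta> \<le> \<bar>sin \<alpha>\<bar>"
    and f: "(v - \<bar>cos \<alpha>\<bar>) * (2*a/\<bar>sin \<alpha>\<bar>) > 4 - 2*a"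
  shows "\<exists>t. 0 < t \<and> t < 2 + (2*a+2)/\<delta> \<and> ray x0 y0 t0 \<alpha> t \<in> omega v a t"
proof -
  have s0: "sin \<alpha> \<noteq> 0" using d by auto
  obtain lo hi where h: "1 \<le> lo" "lo < hi" "hi \<le> 1 + (2*a+2)/\<delta>" "hi - lo = 2*a/\<bar>sin \<alpha>\<bar>"
     "\<forall>t. lo < t \<and> t < hi \<longrightarrow> tri (y0 + (t - t0) * sin \<alpha>) < a"
     "\<bar>tri (x0 + (hi - t0) * cos \<alpha>) - tri (x0 + (lo - t0) * cos \<alpha>)\<bar> \<le> \<bar>cos \<alpha>\<bar> * (hi - lo)"
    using wall_generic[OF s0 d(2) d(1) a(1), of y0 t0 x0 "cos \<alpha>"] a by auto
  have "v * (hi - lo) - (tri (x0 + (hi - t0) * cos \<alpha>) - tri (x0 + (lo - t0) * cos \<alpha>))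
      \<ge> (v - \<bar>cos \<alpha>\<bar>) * (hi - lo)" using h(6) by (simp add: algebra_simps abs_le_iff)
  then have "v * (hi - lo) - (tri (x0 + (hi - t0) * cos \<alpha>) - tri (x0 + (lo - t0) * cos \<alpha>)) > 4 - 2*a"
    using f h(4) by simp
  then show ?thesis
    by (intro ray_hit[OF a, of lo hi _ "\<lambda>t. tri (y0 + (t - t0) * sin \<alpha>)" v "\<lambda>t. tri (x0 + (t - t0) * cos \<alpha>)"])
       (use h in auto)
qed

lemma left_case:
  assumes a: "0 < a" "a < 1/2" and d: "0 < \<delta>" "\<delta> \<le> \<bar>cos \<alpha>\<bar>"
    and f: "(v - \<bar>sin \<alpha>\<bar>) * (2*a/\<bar>cos \<alpha>\<bar>) > 4 - 2*a"
  shows "\<exists>t. 0 < t \<and> t < 2 + (2*a+2)/\<delta> \<and> ray x0 y0 t0 \<alpha> t \<in> omega v a t"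
proof -
  have s0: "cos \<alpha> \<noteq> 0" using d by auto
  obtain lo hi where h: "1 \<le> lo" "lo < hi" "hi \<le> 1 + (2*a+2)/\<delta>" "hi - lo = 2*a/\<bar>cos \<alpha>\<bar>"
     "\<forall>t. lo < t \<and> t < hi \<longrightarrow> tri (x0 + (t - t0) * cos \<alpha>) < a"
     "\<bar>tri (y0 + (hi - t0) * sin \<alpha>) - tri (y0 + (lo - t0) * sin \<alpha>)\<bar> \<le> \<bar>sin \<alpha>\<bar> * (hi - lo)"
    using wall_generic[OF s0 d(2) d(1) a(1), of x0 t0 y0 "sin \<alpha>"] a by auto
  have "v * (hi - lo) + (tri (y0 + (hi - t0) * sin \<alpha>) - tri (y0 + (lo - t0) * sin \<alpha>))
      \<ge> (v - \<bar>sin \<alpha>\<bar>) * (hi - lo)" using h(6) by (simp add: algebra_simps abs_le_iff)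
  then have "v * (hi - lo) + (tri (y0 + (hi - t0) * sin \<alpha>) - tri (y0 + (lo - t0) * sin \<alpha>)) > 4 - 2*a"
    using f h(4) by simp
  then show ?thesis
    by (intro ray_hit[OF a, of lo hi _ "\<lambda>t. tri (y0 + (t - t0) * sin \<alpha>)" v "\<lambda>t. tri (x0 + (t - t0) * cos \<alpha>)"])
       (use h in auto)
qed

lemma abs_half: fixes c s :: real assumes "c^2 + s^2 = 1" "\<bar>s\<bar> < 1/2" shows "1/2 < \<bar>c\<bar>"
proof -
  have "s^2 < (1/2)^2" using assms(2) by (metis abs_ge_zero power2_abs power_strict_mono zero_less_numeral pos2)
  then have "s^2 < 1/4" by (simp add: power2_eq_square)
  then have "1/4 < c^2" using assms(1) by linarith
  then have "(1/2)^2 < \<bar>c\<bar>^2" by (simp add: power2_eq_square)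
  then show ?thesis by (rule power_less_imp_less_base) simp
qed

lemma factor1:
  fixes a v x l :: real
  assumes a: "0 < a" "a \<le> 2" and x: "x < v - (2 - a)/a" and l: "2*a \<le> l"
  shows "(v - x) * l > 4 - 2*a"
proof -
  have "(2 - a)/a < v - x" using x by simp
  have "0 \<le> (2 - a)/a" using a by simp
  then have vx: "0 \<le> v - x" using \<open>(2 - a)/a < v - x\<close> by linarith
  have "2 - a < (v - x) * a" using \<open>(2 - a)/a < v - x\<close> a by (simp add: pos_divide_less_eq)
  moreover have "(v - x) * (2*a) \<le> (v - x) * l" using l \<open>(2 - a)/a < v - x\<close> a
    by (intro mult_left_mono vx)
  ultimately show ?thesis by (simp add: algebra_simps)
qed

lemma partC:
  assumes a: "0 < a" "a < 1/2" and v: "v > (2 - a)/a"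
  shows "\<exists>T>0. tGCC v a T"
proof -
  define \<delta> where "\<delta> = min (v - (2 - a)/a) (1/2)"
  have d1: "\<delta> \<le> 1/2" unfolding \<delta>_def by (rule min.cobounded2)
  have d2: "\<delta> \<le> v - (2 - a)/a" unfolding \<delta>_def by (rule min.cobounded1)
  have d0: "0 < \<delta>" using v unfolding \<delta>_def by simp
  note dpos = d0 d1 d2
  have "3 \<le> (2 - a)/a" using a by (simp add: pos_le_divide_eq)
  then have v3: "3 \<le> v" using v by simp
  have v2a: "v * (2*a) > 4 - 2*a"
  proof -
    have "2 - a < v * a" using v a by (simp add: pos_divide_less_eq)
    then show ?thesis by (simp add: algebra_simps)
  qed
  define T where "T = 2 + (2*a+2)/\<delta>"
  have Tpos: "0 < T" unfolding T_def using dpos a by (simp add: pos_add_strict)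
  have "tGCC v a T"
    unfolding tGCC_def
  proof (intro allI impI)
    fix x0 y0 t0 \<alpha> :: real
    define c where "c = cos \<alpha>"
    define s where "s = sin \<alpha>"
    have cs: "c^2 + s^2 = 1" unfolding c_def s_def by simp
    have cs1: "\<bar>c\<bar>^2 + \<bar>s\<bar>^2 = 1" using cs by simp
    have c1: "\<bar>c\<bar> \<le> 1" "\<bar>s\<bar> \<le> 1" unfolding c_def s_def by auto
    show "\<exists>t. 0 < t \<and> t < T \<and> ray x0 y0 t0 \<alpha> t \<in> omega v a t"
    proof (cases "\<delta> \<le> \<bar>s\<bar> \<and> (\<bar>c\<bar> < \<delta> \<or> \<bar>s\<bar> \<le> \<bar>c\<bar>)")
      case True
      have sp: "0 < \<bar>s\<bar>" using True dpos by linarith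
      have l: "2*a \<le> 2*a/\<bar>s\<bar>" using a sp c1 by (simp add: le_divide_eq)
      have "(v - \<bar>c\<bar>) * (2*a/\<bar>s\<bar>) > 4 - 2*a"
      proof (cases "\<bar>c\<bar> < \<delta>")
        case True
        then show ?thesis by (intro factor1[OF a(1) _ _ l]) (use dpos a in linarith)+
      next
        case False
        then have "\<bar>s\<bar> \<le> \<bar>c\<bar>" using True by auto
        then have "v * \<bar>s\<bar> \<le> v - \<bar>c\<bar>" using ineq_cs[of "\<bar>s\<bar>" "\<bar>c\<bar>" v] cs1 v3 by (simp add: add.commute)
        then have "v * \<bar>s\<bar> * (2*a/\<bar>s\<bar>) \<le> (v - \<bar>c\<bar>) * (2*a/\<bar>s\<bar>)"
          using a sp by (intro mult_right_mono) auto
        moreover have "v * \<bar>s\<bar> * (2*a/\<bar>s\<bar>) = v * (2*a)" using sp by simp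
        ultimately show ?thesis using v2a by linarith
      qed
      then have "\<exists>t. 0 < t \<and> t < 2 + (2*a+2)/\<delta> \<and> ray x0 y0 t0 \<alpha> t \<in> omega v a t"
        using bottom_case[OF a dpos(1)] True unfolding c_def s_def by blast
      then show ?thesis unfolding T_def .
    next
      case False
      have cd: "\<delta> \<le> \<bar>c\<bar>"
      proof (cases "\<bar>s\<bar> < \<delta>")
        case True
        then have "1/2 < \<bar>c\<bar>" using abs_half[OF cs] dpos by linarith
        then show ?thesis using dpos by linarith
      next
        case False
        then show ?thesis using \<open>\<not> (\<delta> \<le> \<bar>s\<bar> \<and> (\<bar>c\<bar> < \<delta> \<or> \<bar>s\<bar> \<le> \<bar>c\<bar>))\<close> by linarith
      qed
      have sp: "0 < \<bar>c\<bar>" using cd dpos by linarith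
      have l: "2*a \<le> 2*a/\<bar>c\<bar>" using a sp c1 by (simp add: le_divide_eq)
      have "(v - \<bar>s\<bar>) * (2*a/\<bar>c\<bar>) > 4 - 2*a"
      proof (cases "\<bar>s\<bar> < \<delta>")
        case True
        then show ?thesis by (intro factor1[OF a(1) _ _ l]) (use dpos a in linarith)+
      next
        case False
        then have "\<bar>c\<bar> \<le> \<bar>s\<bar>" using \<open>\<not> (\<delta> \<le> \<bar>s\<bar> \<and> (\<bar>c\<bar> < \<delta> \<or> \<bar>s\<bar> \<le> \<bar>c\<bar>))\<close> by auto
        then have "v * \<bar>c\<bar> \<le> v - \<bar>s\<bar>" using ineq_cs[of "\<bar>c\<bar>" "\<bar>s\<bar>" v] cs1 v3 by simp
        then have "v * \<bar>c\<bar> * (2*a/\<bar>c\<bar>) \<le> (v - \<bar>s\<bar>) * (2*a/\<bar>c\<bar>)"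
          using a sp by (intro mult_right_mono) auto
        moreover have "v * \<bar>c\<bar> * (2*a/\<bar>c\<bar>) = v * (2*a)" using sp by simp
        ultimately show ?thesis using v2a by linarith
      qed
      then have "\<exists>t. 0 < t \<and> t < 2 + (2*a+2)/\<delta> \<and> ray x0 y0 t0 \<alpha> t \<in> omega v a t"
        using left_case[OF a dpos(1)] cd unfolding c_def s_def by blast
      then show ?thesis unfolding T_def .
    qed
  qed
  then show ?thesis using Tpos by blast
qed



lemma tri_int: "tri (real_of_int m) = 0 \<or> tri (real_of_int m) = 1"
proof (cases "even m")
  case True
  then obtain k where "m = 2 * k" by (auto elim: evenE)
  then show ?thesis using tri_eq[of 0 k] by simp
next
  case False
  then obtain k where "m = 2 * k + 1" by (auto elim: oddE)
  then have "real_of_int m = 2 * real_of_int (k + 1) + (-1)" by simp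
  then show ?thesis using tri_eq[of "-1" "k+1"] by simp
qed

lemma affine_strip:
  fixes u0 c b ta tb :: real
  assumes b: "0 < b" "b < 1/2" and tt: "ta \<le> tb"
    and inb: "\<And>t. ta \<le> t \<Longrightarrow> t \<le> tb \<Longrightarrow> b \<le> tri (u0 + t * c) \<and> tri (u0 + t * c) \<le> 1 - b"
  shows "\<bar>tri (u0 + tb * c) - tri (u0 + ta * c)\<bar> = \<bar>c\<bar> * (tb - ta)"
proof -
  define U where "U t = u0 + t * c" for t
  have cU: "continuous_on S U" for S unfolding U_def by (intro continuous_intros)
  have nint: "U t \<noteq> real_of_int m" if "ta \<le> t" "t \<le> tb" for t m
  proof
    assume "U t = real_of_int m"
    then have "tri (U t) = 0 \<or> tri (U t) = 1" using tri_int by simp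
    then show False using inb[OF that] b unfolding U_def by auto
  qed
  define n where "n = \<lfloor>U ta\<rfloor>"
  have n0: "real_of_int n < U ta" "U ta < real_of_int n + 1"
    using nint[OF order.refl tt, of n] unfolding n_def by linarith+
  have bnd: "real_of_int n < U t \<and> U t < real_of_int n + 1" if t: "ta \<le> t" "t \<le> tb" for t
  proof (rule ccontr)
    assume "\<not> ?thesis"
    then consider "U t \<le> real_of_int n" | "real_of_int n + 1 \<le> U t" by linarith
    then show False
    proof cases
      case 1
      obtain t' where "ta \<le> t'" "t' \<le> t" "U t' = real_of_int n"
        using IVT2'[of U t "real_of_int n" ta, OF 1 _ t(1) cU] n0 by auto
      then show False using nint[of t' n] t by auto
    next
      case 2
      obtain t' where "ta \<le> t'" "t' \<le> t" "U t' = real_of_int (n + 1)"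
        using IVT'[of U ta "real_of_int (n+1)" t, OF _ _ t(1) cU] n0 2 by auto
      then show False using nint[of t' "n+1"] t by auto
    qed
  qed
  have fa: "U ta = u0 + ta * c" "U tb = u0 + tb * c" unfolding U_def by auto
  have d: "U tb - U ta = (tb - ta) * c" unfolding U_def by (simp add: algebra_simps)
  show ?thesis
  proof (cases "even n")
    case True
    then obtain k where k: "n = 2 * k" by (auto elim: evenE)
    have "tri (U ta) = U ta - real_of_int n" "tri (U tb) = U tb - real_of_int n"
      using tri_even[OF k] bnd[OF order.refl tt] bnd[OF tt order.refl] by auto
    then show ?thesis using d tt unfolding fa by (simp add: abs_mult)
  next
    case False
    then obtain k where k: "n = 2 * k + 1" by (auto elim: oddE)
    then have k': "n + 1 = 2 * (k + 1)" by simp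
    have "tri (U ta) = real_of_int n + 1 - U ta" "tri (U tb) = real_of_int n + 1 - U tb"
      using tri_odd[of n "k+1"] k bnd[OF order.refl tt] bnd[OF tt order.refl] by auto
    then have "tri (u0 + tb * c) - tri (u0 + ta * c) = - ((tb - ta) * c)" using d unfolding fa by simp
    then show ?thesis using tt by (simp add: abs_mult)
  qed
qed

lemma strip_exit:
  assumes b: "0 < b" "b < 1/2" and tt: "ta \<le> tb" and len: "tb - ta > sqrt 2 * (1 - 2*b)"
  shows "\<exists>t1. ta \<le> t1 \<and> t1 \<le> tb \<and>
     (tri (x0 + (t1 - t0) * cos \<alpha>) < b \<or> tri (x0 + (t1 - t0) * cos \<alpha>) > 1 - b
      \<or> tri (y0 + (t1 - t0) * sin \<alpha>) < b \<or> tri (y0 + (t1 - t0) * sin \<alpha>) > 1 - b)"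
proof (rule ccontr)
  assume "\<not> ?thesis"
  then have h: "\<And>t. ta \<le> t \<Longrightarrow> t \<le> tb \<Longrightarrow>
      b \<le> tri ((x0 - t0 * cos \<alpha>) + t * cos \<alpha>) \<and> tri ((x0 - t0 * cos \<alpha>) + t * cos \<alpha>) \<le> 1 - b \<and>
      b \<le> tri ((y0 - t0 * sin \<alpha>) + t * sin \<alpha>) \<and> tri ((y0 - t0 * sin \<alpha>) + t * sin \<alpha>) \<le> 1 - b"
    by (auto simp: algebra_simps not_less)
  have ex: "\<bar>tri ((x0 - t0 * cos \<alpha>) + tb * cos \<alpha>) - tri ((x0 - t0 * cos \<alpha>) + ta * cos \<alpha>)\<bar> = \<bar>cos \<alpha>\<bar> * (tb - ta)"
    by (rule affine_strip[OF b tt]) (use h in auto)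
  have ey: "\<bar>tri ((y0 - t0 * sin \<alpha>) + tb * sin \<alpha>) - tri ((y0 - t0 * sin \<alpha>) + ta * sin \<alpha>)\<bar> = \<bar>sin \<alpha>\<bar> * (tb - ta)"
    by (rule affine_strip[OF b tt]) (use h in auto)
  have hx: "\<bar>cos \<alpha>\<bar> * (tb - ta) \<le> 1 - 2*b" using ex h[of ta] h[of tb] tt by (auto simp: abs_le_iff)
  have hy: "\<bar>sin \<alpha>\<bar> * (tb - ta) \<le> 1 - 2*b" using ey h[of ta] h[of tb] tt by (auto simp: abs_le_iff)
  have "(\<bar>cos \<alpha>\<bar> * (tb - ta))^2 \<le> (1 - 2*b)^2" using hx tt by (intro power_mono) auto
  moreover have "(\<bar>sin \<alpha>\<bar> * (tb - ta))^2 \<le> (1 - 2*b)^2" using hy tt by (intro power_mono) auto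
  ultimately have "(cos \<alpha>)^2 * (tb - ta)^2 + (sin \<alpha>)^2 * (tb - ta)^2 \<le> 2 * (1 - 2*b)^2"
    by (simp add: power_mult_distrib)
  also have "(cos \<alpha>)^2 * (tb - ta)^2 + (sin \<alpha>)^2 * (tb - ta)^2 = (tb - ta)^2"
    by (simp add: distrib_right[symmetric])
  finally have "(tb - ta)^2 \<le> 2 * (1 - 2*b)^2" .
  then have "sqrt ((tb - ta)^2) \<le> sqrt (2 * (1 - 2*b)^2)" by (rule real_sqrt_le_mono)
  then have "tb - ta \<le> sqrt 2 * (1 - 2*b)" using tt b by (simp add: real_sqrt_mult)
  then show False using len by simp
qed

lemma lower_bound:
  assumes a: "0 < a" "a < 1/2" and T: "tGCC v a T"
  shows "sqrt 2 * (1 - 2*a) < T"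
proof (rule ccontr)
  assume "\<not> ?thesis"
  then have TL: "T \<le> sqrt 2 * (1 - 2*a)" by simp
  have H: "\<forall>x0 y0 t0 \<alpha>. 0 \<le> x0 \<and> x0 \<le> 1 \<and> 0 \<le> y0 \<and> y0 \<le> 1 \<and> -pi < \<alpha> \<and> \<alpha> \<le> pi \<longrightarrow>
        (\<exists>t. 0 < t \<and> t < T \<and> ray x0 y0 t0 \<alpha> t \<in> omega v a t)" using T unfolding tGCC_def by blast
  have pr: "-pi < pi/4" "pi/4 \<le> pi" using pi_gt_zero by linarith+
  obtain t where t: "0 < t" "t < T" "ray a a 0 (pi/4) t \<in> omega v a t"
    using H[rule_format, of a a "pi/4" 0] a pr by auto
  define u where "u = a + t * (sqrt 2 / 2)"
  have "t * (sqrt 2 / 2) < sqrt 2 * (1 - 2*a) * (sqrt 2 / 2)" using t TL by (intro mult_strict_right_mono) auto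
  also have "\<dots> = 1 - 2*a" by (simp add: algebra_simps)
  finally have u1: "u < 1 - a" unfolding u_def by simp
  have u0: "a < u" unfolding u_def using t by simp
  have tu: "tri u = u" using tri_even[of 0 0 u] u0 u1 a by simp
  have r: "ray a a 0 (pi/4) t = (u, u)" unfolding ray_def u_def using tu u_def by (simp add: cos_45 sin_45)
  define P where "P = bdry_point (v * t)"
  have "\<bar>u - fst P\<bar> < a \<and> \<bar>u - snd P\<bar> < a"
    using t(3) unfolding r omega_def ctrl_path_def P_def by auto
  then show False using bdry_side[of "v * t"] u0 u1 unfolding P_def[symmetric] by auto
qed



lemma upper:
  assumes a: "0 < a" "a < 1/2" and e: "0 < \<epsilon>"
  shows "\<exists>V. \<forall>v\<ge>V. tGCC v a (sqrt 2 * (1 - 2*a) + \<epsilon>)"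
proof -
  define \<delta> where "\<delta> = min (a/2) (\<epsilon>/6)"
  have d: "0 < \<delta>" "\<delta> \<le> a/2" "\<delta> \<le> \<epsilon>/6" unfolding \<delta>_def using a e by auto
  define b where "b = a - \<delta>"
  have b: "0 < b" "b < 1/2" unfolding b_def using d a by auto
  define V where "V = 2 + 8/\<delta>"
  have s2: "sqrt 2 \<le> 3/2"
  proof -
    have "sqrt 2 \<le> sqrt ((3/2)^2)" by (intro real_sqrt_le_mono) (simp add: power2_eq_square)
    then show ?thesis by simp
  qed
  have "\<forall>v\<ge>V. tGCC v a (sqrt 2 * (1 - 2*a) + \<epsilon>)"
  proof (intro allI impI)
    fix v assume vV: "V \<le> v"
    have vd: "\<delta> + 4 \<le> v * (\<delta>/2)"
    proof -
      have "V * (\<delta>/2) \<le> v * (\<delta>/2)" using vV d by (intro mult_right_mono) auto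
      moreover have "V * (\<delta>/2) = \<delta> + 4" unfolding V_def using d by (simp add: field_simps)
      ultimately show ?thesis by simp
    qed
    have key: "v * (\<delta>/2) - D > 4 - 2*a \<and> v * (\<delta>/2) + D > 4 - 2*a" if "\<bar>D\<bar> \<le> \<delta>/2" for D
      using that vd d a by (auto simp: abs_le_iff)
    show "tGCC v a (sqrt 2 * (1 - 2*a) + \<epsilon>)"
      unfolding tGCC_def
    proof (intro allI impI)
      fix x0 y0 t0 \<alpha> :: real
      define X where "X = (\<lambda>t. tri (x0 + (t - t0) * cos \<alpha>))"
      define Y where "Y = (\<lambda>t. tri (y0 + (t - t0) * sin \<alpha>))"
      have lipX: "\<bar>X t - X t'\<bar> \<le> \<bar>t - t'\<bar>" for t t'
      proof -
        have "\<bar>X t - X t'\<bar> \<le> \<bar>(x0 + (t - t0) * cos \<alpha>) - (x0 + (t' - t0) * cos \<alpha>)\<bar>"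
          unfolding X_def by (rule tri_lip)
        also have "(x0 + (t - t0) * cos \<alpha>) - (x0 + (t' - t0) * cos \<alpha>) = (t - t') * cos \<alpha>" by (simp add: algebra_simps)
        also have "\<bar>(t - t') * cos \<alpha>\<bar> \<le> \<bar>t - t'\<bar>" by (simp add: abs_mult mult_left_le)
        finally show ?thesis .
      qed
      have lipY: "\<bar>Y t - Y t'\<bar> \<le> \<bar>t - t'\<bar>" for t t'
      proof -
        have "\<bar>Y t - Y t'\<bar> \<le> \<bar>(y0 + (t - t0) * sin \<alpha>) - (y0 + (t' - t0) * sin \<alpha>)\<bar>"
          unfolding Y_def by (rule tri_lip)
        also have "(y0 + (t - t0) * sin \<alpha>) - (y0 + (t' - t0) * sin \<alpha>) = (t - t') * sin \<alpha>" by (simp add: algebra_simps)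
        also have "\<bar>(t - t') * sin \<alpha>\<bar> \<le> \<bar>t - t'\<bar>" by (simp add: abs_mult mult_left_le)
        finally show ?thesis .
      qed
      define ta where "ta = \<delta>"
      define tb where "tb = 2*\<delta> + sqrt 2 * (1 - 2*b)"
      have tt: "ta \<le> tb" and len: "tb - ta > sqrt 2 * (1 - 2*b)" unfolding ta_def tb_def using d b by auto
      obtain t1 where t1: "ta \<le> t1" "t1 \<le> tb"
        "X t1 < b \<or> X t1 > 1 - b \<or> Y t1 < b \<or> Y t1 > 1 - b"
        using strip_exit[OF b tt len, of x0 t0 \<alpha> y0] unfolding X_def Y_def by blast
      define lo where "lo = t1"
      define hi where "hi = t1 + \<delta>/2"
      have l0: "0 \<le> lo" using t1 d unfolding lo_def ta_def by simp
      have l1: "lo < hi" using d unfolding lo_def hi_def by simp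
      have "tb + \<delta>/2 = sqrt 2 * (1 - 2*a) + (5/2) * \<delta> + 2 * sqrt 2 * \<delta>"
        unfolding tb_def b_def by (simp add: algebra_simps)
      moreover have "2 * sqrt 2 * \<delta> \<le> 3 * \<delta>" using s2 d by (simp add: mult_right_mono)
      ultimately have "tb + \<delta>/2 \<le> sqrt 2 * (1 - 2*a) + \<epsilon>" using d by linarith
      then have l2: "hi \<le> sqrt 2 * (1 - 2*a) + \<epsilon>" unfolding hi_def using t1 by simp
      have dX: "\<bar>X hi - X lo\<bar> \<le> \<delta>/2" using lipX[of hi lo] d unfolding hi_def lo_def by simp
      have dY: "\<bar>Y hi - Y lo\<bar> \<le> \<delta>/2" using lipY[of hi lo] d unfolding hi_def lo_def by simp
      have near1: "\<bar>X t - X t1\<bar> < \<delta>/2 \<and> \<bar>Y t - Y t1\<bar> < \<delta>/2" if "lo < t" "t < hi" for t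
        using lipX[of t t1] lipY[of t t1] that unfolding lo_def hi_def by auto
      have hd: "hi - lo = \<delta>/2" unfolding hi_def lo_def by simp
      have side: "((\<forall>t. lo < t \<and> t < hi \<longrightarrow> Y t < a) \<and> v * (hi - lo) - (X hi - X lo) > 4 - 2*a)
             \<or> ((\<forall>t. lo < t \<and> t < hi \<longrightarrow> X t > 1 - a) \<and> v * (hi - lo) - (Y hi - Y lo) > 4 - 2*a)
             \<or> ((\<forall>t. lo < t \<and> t < hi \<longrightarrow> Y t > 1 - a) \<and> v * (hi - lo) + (X hi - X lo) > 4 - 2*a)
             \<or> ((\<forall>t. lo < t \<and> t < hi \<longrightarrow> X t < a) \<and> v * (hi - lo) + (Y hi - Y lo) > 4 - 2*a)"
        using t1(3) near1 key[OF dX] key[OF dY] unfolding hd b_def by (auto simp: abs_less_iff) (smt (verit))+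
      show "\<exists>t. 0 < t \<and> t < sqrt 2 * (1 - 2*a) + \<epsilon> \<and> ray x0 y0 t0 \<alpha> t \<in> omega v a t"
        by (rule ray_hit[OF a l0 l1 l2 side X_def Y_def])
    qed
  qed
  then show ?thesis by blast
qed



lemma T0_le: "0 < T \<Longrightarrow> tGCC v a T \<Longrightarrow> T0 v a \<le> ereal T"
  unfolding T0_def by (rule Inf_lower) auto

lemma T0_ge: assumes a: "0 < a" "a < 1/2" shows "ereal (sqrt 2 * (1 - 2*a)) \<le> T0 v a"
  unfolding T0_def by (rule Inf_greatest) (use lower_bound[OF a] in \<open>auto simp: less_imp_le\<close>)

lemma part1:
  assumes a: "0 < a" "a < 1/2"
  shows "(\<forall>v. v > (2 - a) / a \<longrightarrow> T0 v a < \<infinity>) \<and>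
            ((\<lambda>v. T0 v a) \<longlongrightarrow> ereal (max (sqrt 2 * (1 - 2 * a)) 0)) at_top"
proof
  show "\<forall>v. v > (2 - a) / a \<longrightarrow> T0 v a < \<infinity>"
  proof (intro allI impI)
    fix v assume "v > (2 - a)/a"
    then obtain T where "T > 0" "tGCC v a T" using partC[OF a] by blast
    then have "T0 v a \<le> ereal T" by (rule T0_le)
    moreover have "ereal T < \<infinity>" by simp
    ultimately show "T0 v a < \<infinity>" by (rule le_less_trans)
  qed
  define L where "L = sqrt 2 * (1 - 2*a)"
  have L0: "0 < L" unfolding L_def using a by simp
  have "max L 0 = L" using L0 by simp
  have "((\<lambda>v. T0 v a) \<longlongrightarrow> ereal L) at_top"
  proof (rule order_tendstoI)
    fix y assume "y < ereal L"
    then show "\<forall>\<^sub>F v in at_top. y < T0 v a" using T0_ge[OF a] unfolding L_def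
      by (intro always_eventually) (auto intro: less_le_trans)
  next
    fix y assume y: "ereal L < y"
    obtain \<epsilon> where e: "0 < \<epsilon>" "ereal (L + \<epsilon>) < y"
    proof (cases y)
      case (real r)
      have Lr: "L < r" using y real by simp
      have "0 < (r - L)/2" using Lr by simp
      moreover have "L + (r - L)/2 < r" using Lr by (simp add: field_simps)
      ultimately show ?thesis using real that[of "(r - L)/2"] by auto
    next
      case PInf
      then show ?thesis using that[of 1] by auto
    next
      case MInf
      then show ?thesis using y by auto
    qed
    obtain V where V: "\<forall>v\<ge>V. tGCC v a (L + \<epsilon>)" using upper[OF a e(1)] unfolding L_def by blast
    have "\<forall>v\<ge>V. T0 v a < y"
    proof (intro allI impI)
      fix v assume "V \<le> v"
      then have "T0 v a \<le> ereal (L + \<epsilon>)" using V L0 e by (intro T0_le) auto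
      then show "T0 v a < y" using e by (simp add: le_less_trans)
    qed
    then show "\<forall>\<^sub>F v in at_top. T0 v a < y" by (auto simp: eventually_at_top_linorder)
  qed
  then show "((\<lambda>v. T0 v a) \<longlongrightarrow> ereal (max (sqrt 2 * (1 - 2 * a)) 0)) at_top"
    using \<open>max L 0 = L\<close> unfolding L_def by simp
qed



lemma sqrt2_irr: "sqrt 2 \<notin> \<rat>"
proof
  assume "sqrt 2 \<in> \<rat>"
  then obtain m n :: nat where n: "n \<noteq> 0" and sq: "\<bar>sqrt 2\<bar> = real m / real n" and cop: "coprime m n"
    by (rule Rats_abs_nat_div_natE)
  have "real m = sqrt 2 * real n" using sq n by (simp add: field_simps)
  then have "real (m^2) = real (2 * n^2)" by (simp add: power_mult_distrib)
  then have eq: "m^2 = 2 * n^2" by (simp only: of_nat_eq_iff)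
  then have "even (m^2)" by simp
  then have "even m" by simp
  then obtain k where k: "m = 2 * k" by (auto elim: evenE)
  then have "n^2 = 2 * k^2" using eq by (simp add: power_mult_distrib)
  then have "even (n^2)" by simp
  then have "even n" by simp
  then show False using cop \<open>even m\<close> by (metis coprime_common_divisor dvd_refl odd_one)
qed

lemma tri_shift: "tri (u + 2 * real_of_int k) = tri u"
proof (rule tri_decomp[of u])
  fix m :: int and w assume h: "u = 2 * real_of_int m + w" "-1 \<le> w" "w < 1" "tri u = \<bar>w\<bar>"
  have eq: "u + 2 * real_of_int k = 2 * real_of_int (m + k) + w" using h by simp
  have "tri (u + 2 * real_of_int k) = \<bar>w\<bar>" unfolding eq by (rule tri_eq) (use h in auto)
  then show ?thesis using h by simp
qed

definition bx :: "real \<Rightarrow> real" where "bx s = max 0 (min 1 (3/2 - 2 * tri ((s - 3/2)/2)))"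
definition by' :: "real \<Rightarrow> real" where "by' s = max 0 (min 1 (3/2 - 2 * tri ((s - 5/2)/2)))"

lemma bdry_closed: "bdry_point s = (bx s, by' s)"
proof (rule bdry_decomp[of s])
  fix r m assume r: "0 \<le> r" "r < 4" "s = r + 4 * real_of_int m"
  have t1: "tri ((s - 3/2)/2) = (if r \<le> 7/2 then \<bar>r - 3/2\<bar>/2 else (11/2 - r)/2)"
  proof (cases "r \<le> 7/2")
    case True
    have eq: "(s - 3/2)/2 = 2 * real_of_int m + (r - 3/2)/2" using r by (simp add: field_simps)
    have "tri ((s - 3/2)/2) = \<bar>(r - 3/2)/2\<bar>" unfolding eq by (rule tri_eq) (use True r in \<open>auto simp: abs_if\<close>)
    then show ?thesis using True by simp
  next
    case False
    have eq: "(s - 3/2)/2 = 2 * real_of_int (m+1) + (r - 11/2)/2" using r by (simp add: field_simps)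
    have "tri ((s - 3/2)/2) = \<bar>(r - 11/2)/2\<bar>" unfolding eq by (rule tri_eq) (use False r in \<open>auto simp: abs_if\<close>)
    then show ?thesis using False r by (simp add: abs_if field_simps)
  qed
  have t2: "tri ((s - 5/2)/2) = (if 1/2 \<le> r then \<bar>r - 5/2\<bar>/2 else (r + 3/2)/2)"
  proof (cases "1/2 \<le> r")
    case True
    have eq: "(s - 5/2)/2 = 2 * real_of_int m + (r - 5/2)/2" using r by (simp add: field_simps)
    have "tri ((s - 5/2)/2) = \<bar>(r - 5/2)/2\<bar>" unfolding eq by (rule tri_eq) (use True r in \<open>auto simp: abs_if\<close>)
    then show ?thesis using True by simp
  next
    case False
    have eq: "(s - 5/2)/2 = 2 * real_of_int (m - 1) + (r + 3/2)/2" using r by (simp add: field_simps)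
    have "tri ((s - 5/2)/2) = \<bar>(r + 3/2)/2\<bar>" unfolding eq by (rule tri_eq) (use False r in \<open>auto simp: abs_if\<close>)
    then show ?thesis using False r by (simp add: abs_if field_simps)
  qed
  have bp: "bdry_point s = (if r < 1 then (r, 0) else if r < 2 then (1, r - 1) else if r < 3 then (3 - r, 1) else (0, 4 - r))"
    unfolding r(3) by (rule bdry_red[OF r(1,2)])
  show ?thesis unfolding bp bx_def by'_def t1 t2
    using r(1,2) by (auto simp: abs_if max_def min_def field_simps)
qed

lemma continuous_bx: "continuous_on S bx" unfolding bx_def tri_def by (intro continuous_intros) auto
lemma continuous_by: "continuous_on S by'" unfolding by'_def tri_def by (intro continuous_intros) auto

lemma bdry_rat: assumes "fst (bdry_point s) \<in> \<rat>" "snd (bdry_point s) \<in> \<rat>" shows "s \<in> \<rat>"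
proof (rule bdry_decomp[of s])
  fix r m assume r: "0 \<le> r" "r < 4" "s = r + 4 * real_of_int m"
  have "r \<in> \<rat>"
  proof -
    consider "r < 1" | "1 \<le> r" "r < 2" | "2 \<le> r" "r < 3" | "3 \<le> r" by linarith
    then show ?thesis
    proof cases
      case 1 then show ?thesis using assms unfolding r(3) bdry_red[OF r(1,2)] by simp
    next
      case 2
      then have "r - 1 \<in> \<rat>" using assms unfolding r(3) bdry_red[OF r(1,2)] by simp
      then show ?thesis using Rats_diff_iff[of r 1] by simp
    next
      case 3
      then have "3 - r \<in> \<rat>" using assms unfolding r(3) bdry_red[OF r(1,2)] by simp
      then show ?thesis using Rats_diff_iff[of 3 r] by simp
    next
      case 4
      then have "4 - r \<in> \<rat>" using assms r unfolding r(3) bdry_red[OF r(1,2)] by simp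
      then show ?thesis using Rats_diff_iff[of 4 r] by simp
    qed
  qed
  then show ?thesis unfolding r(3) by (intro Rats_add Rats_mult) auto
qed



lemma T0_inf:
  assumes "0 \<le> x0" "x0 \<le> 1" "0 \<le> y0" "y0 \<le> 1" "-pi < \<alpha>" "\<alpha> \<le> pi"
    and miss: "\<forall>t>0. ray x0 y0 t0 \<alpha> t \<notin> omega v a t"
  shows "T0 v a = \<infinity>"
proof -
  have E: "{T. 0 < T \<and> tGCC v a T} = {}"
  proof (rule ccontr)
    assume "{T. 0 < T \<and> tGCC v a T} \<noteq> {}"
    then obtain T where "tGCC v a T" by auto
    then obtain t where "0 < t" "ray x0 y0 t0 \<alpha> t \<in> omega v a t"
      using assms unfolding tGCC_def by blast
    then show False using miss by auto
  qed
  show ?thesis unfolding T0_def E image_empty Inf_empty top_ereal_def by simp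
qed

lemma half_not_int: "(1/2::real) \<notin> \<int>"
proof
  assume "(1/2::real) \<in> \<int>"
  then obtain k where "(1/2::real) = real_of_int k" by (auto elim: Ints_cases)
  then have "real_of_int (2 * k) = 1" by simp
  then have "2 * k = 1" by linarith
  then show False by presburger
qed

lemma hit_rat:
  fixes n N r w w' d z :: real
  assumes "n > 0" "n^2 = N" "N \<in> \<rat>" "r \<in> \<rat>" "w \<in> \<rat>" "w \<noteq> 0" "w' \<in> \<rat>"
    "1/2 + d * (w / n) = z" "z \<in> \<int>"
  shows "1/2 + d * (w' / n) \<in> \<rat> \<and> (n * r) * d \<in> \<rat>"
proof -
  have zq: "z \<in> \<rat>" using assms(9) Ints_subset_Rats by blast
  have d: "d = (z - 1/2) * n / w" using assms(1,6,8) by (auto simp: field_simps)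
  have "1/2 + d * (w' / n) = 1/2 + (z - 1/2) * w' / w" unfolding d using assms(1,6) by (simp add: field_simps)
  moreover have "(n * r) * d = r * N * (z - 1/2) / w" unfolding d assms(2)[symmetric] using assms(1,6) by (simp add: field_simps power2_eq_square)
  ultimately show ?thesis using assms zq by simp
qed

lemma bx_period: "bx (s + 4 * real_of_int m) = bx s" "by' (s + 4 * real_of_int m) = by' s"
  using bdry_period[of s m] unfolding bdry_closed by auto

lemma part2:
  fixes p q :: nat
  assumes v0: "0 \<le> v" and rQ: "r \<in> \<rat>" and vdef: "v = sqrt (real (p^2 + q^2)) * r"
  shows "\<exists>a0>0. \<forall>a. 0 < a \<and> a < a0 \<longrightarrow> T0 v a = \<infinity>"
proof (cases "v = 0")
  case True
  have t12: "tri (1/2) = 1/2" using tri_even[of 0 0 "1/2"] by simp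
  have "T0 v a = \<infinity>" if "0 < a" "a < 1/2" for a
  proof (rule T0_inf[of 0 "1/2" 0 0])
    show "\<forall>t>0. ray 0 (1 / 2) 0 0 t \<notin> omega v a t"
      using that t12 bdry_base[of 0] True unfolding ray_def omega_def ctrl_path_def by auto
  qed (use pi_gt_zero in auto)
  then show ?thesis by (intro exI[of _ "1/2"]) auto
next
  case False
  then have vpos: "0 < v" using v0 by simp
  define n where "n = sqrt (real (p^2 + q^2))"
  have n0: "0 \<le> n" unfolding n_def by simp
  have nr: "v = n * r" unfolding n_def vdef ..
  then have npos: "0 < n" using vpos n0 by (cases "n = 0") auto
  have rpos: "0 < r" using nr vpos npos by (simp add: zero_less_mult_iff)
  have n2: "n^2 = real p ^2 + real q ^2" unfolding n_def by simp
  obtain P Q :: int where PQ: "Q > 0" "r = real_of_int P / real_of_int Q"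
    using Rats_cases'[OF rQ] by metis
  have rQP: "r * real_of_int Q = real_of_int P" using PQ by simp
  have pn: "real p \<le> n" unfolding n_def by (rule real_le_rsqrt) simp
  have qn: "real q \<le> n" unfolding n_def by (rule real_le_rsqrt) simp
  define \<alpha> where "\<alpha> = arccos (real p / n)"
  have h0: "0 \<le> real p / n" using npos by simp
  have pn1a: "-1 \<le> real p / n" using h0 by linarith
  have pn1b: "real p / n \<le> 1" using pn npos by (simp add: divide_le_eq_1)
  note pn1 = pn1a pn1b
  have ca: "cos \<alpha> = real p / n" unfolding \<alpha>_def using pn1 by simp
  have sa: "sin \<alpha> = real q / n"
  proof -
    have "sin \<alpha> = sqrt (1 - (real p / n)^2)" unfolding \<alpha>_def using pn1 by (intro sin_arccos_abs) auto
    also have "1 - (real p / n)^2 = (n^2 - (real p)^2) / n^2" using npos by (simp add: power_divide field_simps)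
    also have "n^2 - (real p)^2 = (real q)^2" using n2 by simp
    also have "(real q)^2 / n^2 = (real q / n)^2" by (simp add: power_divide)
    also have "sqrt ((real q / n)^2) = real q / n" using npos by simp
    finally show ?thesis .
  qed
  have arange: "-pi < \<alpha>" "\<alpha> \<le> pi" unfolding \<alpha>_def using arccos_bounded[OF pn1] pi_gt_zero by linarith+
  define \<tau> where "\<tau> = sqrt 2 / v"
  define X where "X t = tri (1/2 + (t - \<tau>) * (real p / n))" for t
  define Y where "Y t = tri (1/2 + (t - \<tau>) * (real q / n))" for t
  define D where "D t = max \<bar>X t - bx (v * t)\<bar> \<bar>Y t - by' (v * t)\<bar>" for t
  have ray_eq: "ray (1/2) (1/2) \<tau> \<alpha> t = (X t, Y t)" for t unfolding ray_def X_def Y_def ca sa by simp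
  have N: "n^2 = real (p^2 + q^2)" "real (p^2 + q^2) \<in> \<rat>" using n2 by auto
  have vtau: "v * \<tau> = sqrt 2" unfolding \<tau>_def using vpos by simp
  have vt: "v * t = sqrt 2 + (n * r) * (t - \<tau>)" for t
  proof -
    have "v * t = v * \<tau> + v * (t - \<tau>)" by (simp add: algebra_simps)
    then show ?thesis unfolding vtau using nr by simp
  qed
  have Dpos: "0 < D t" for t
  proof (rule ccontr)
    assume "\<not> 0 < D t"
    then have "X t = bx (v * t)" "Y t = by' (v * t)" unfolding D_def by auto
    then have eqP: "bdry_point (v * t) = (X t, Y t)" by (simp add: bdry_closed)
    have "sqrt 2 \<in> \<rat>"
    proof -
      have main: "1/2 + (t - \<tau>) * (w' / n) \<in> \<rat> \<and> (n * r) * (t - \<tau>) \<in> \<rat>"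
        if "tri (1/2 + (t - \<tau>) * (w / n)) = 0 \<or> tri (1/2 + (t - \<tau>) * (w / n)) = 1"
           "w \<in> {real p, real q}" "w' \<in> {real p, real q}" for w w'
      proof -
        have zi: "1/2 + (t - \<tau>) * (w / n) \<in> \<int>" by (rule tri_01_int[OF that(1)])
        have "w \<noteq> 0"
        proof
          assume "w = 0" then show False using zi half_not_int by simp
        qed
        moreover have "w \<in> \<rat>" "w' \<in> \<rat>" using that(2,3) by auto
        ultimately show ?thesis
          using hit_rat[OF npos N(1) N(2) rQ, of w w' "t - \<tau>"] zi by blast
      qed
      have fs: "fst (bdry_point (v * t)) = X t" "snd (bdry_point (v * t)) = Y t" using eqP by simp_all
      have cases: "(X t = 0 \<or> X t = 1) \<or> (Y t = 0 \<or> Y t = 1)" using bdry_side[of "v * t"] unfolding fs by blast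
      have rat2: "X t \<in> \<rat> \<and> Y t \<in> \<rat> \<and> (n * r) * (t - \<tau>) \<in> \<rat>"
        using cases
      proof
        assume h: "X t = 0 \<or> X t = 1"
        have h': "tri (1/2 + (t - \<tau>) * (real p / n)) = 0 \<or> tri (1/2 + (t - \<tau>) * (real p / n)) = 1"
          using h unfolding X_def .
        have m: "1/2 + (t - \<tau>) * (real q / n) \<in> \<rat> \<and> (n * r) * (t - \<tau>) \<in> \<rat>"
          by (rule main[OF h']) simp_all
        have x: "X t \<in> \<rat>" using h by (elim disjE) simp_all
        have y: "Y t \<in> \<rat>" unfolding Y_def by (rule tri_rat) (use m in blast)
        show ?thesis using x y m by blast
      next
        assume h: "Y t = 0 \<or> Y t = 1"
        have h': "tri (1/2 + (t - \<tau>) * (real q / n)) = 0 \<or> tri (1/2 + (t - \<tau>) * (real q / n)) = 1"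
          using h unfolding Y_def .
        have m: "1/2 + (t - \<tau>) * (real p / n) \<in> \<rat> \<and> (n * r) * (t - \<tau>) \<in> \<rat>"
          by (rule main[OF h']) simp_all
        have y: "Y t \<in> \<rat>" using h by (elim disjE) simp_all
        have x: "X t \<in> \<rat>" unfolding X_def by (rule tri_rat) (use m in blast)
        show ?thesis using x y m by blast
      qed
      have "v * t \<in> \<rat>" by (rule bdry_rat) (use fs rat2 in simp_all)
      then have "v * t - (n * r) * (t - \<tau>) \<in> \<rat>" using rat2 by simp
      then show ?thesis using vt[of t] by simp
    qed
    then show False using sqrt2_irr by simp
  qed
  define \<Theta> where "\<Theta> = 4 * n * real_of_int Q"
  have Thpos: "0 < \<Theta>" unfolding \<Theta>_def using npos PQ by simp
  have Dper: "D (t + real_of_int k * \<Theta>) = D t" for t k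
  proof -
    have ex: "1/2 + (t + real_of_int k * \<Theta> - \<tau>) * (w / n) = (1/2 + (t - \<tau>) * (w / n)) + 2 * real_of_int (2 * k * Q * int m)"
      if "w = real m" for w m
      unfolding \<Theta>_def that using npos by (simp add: field_simps)
    have ev: "v * (t + real_of_int k * \<Theta>) = v * t + 4 * real_of_int (k * int (p^2 + q^2) * P)"
    proof -
      have "v * (real_of_int k * \<Theta>) = 4 * real_of_int k * (n^2) * (r * real_of_int Q)"
        unfolding \<Theta>_def nr by (simp add: power2_eq_square algebra_simps)
      also have "\<dots> = 4 * real_of_int (k * int (p^2 + q^2) * P)" unfolding rQP N(1) by simp
      finally show ?thesis by (simp add: algebra_simps)
    qed
    show ?thesis unfolding D_def X_def Y_def ev bx_period ex[OF refl] tri_shift by simp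
  qed
  have cD: "continuous_on {0..\<Theta>} D" unfolding D_def X_def Y_def bx_def by'_def tri_def
    by (intro continuous_intros) auto
  obtain tm where tm: "tm \<in> {0..\<Theta>}" "\<forall>y\<in>{0..\<Theta>}. D tm \<le> D y"
    using continuous_attains_inf[OF compact_Icc _ cD] Thpos by auto
  define d where "d = D tm"
  have dpos: "0 < d" unfolding d_def by (rule Dpos)
  have Dge: "d \<le> D t" for t
  proof -
    define k where "k = \<lfloor>t / \<Theta>\<rfloor>"
    have k1: "real_of_int k \<le> t / \<Theta>" "t / \<Theta> < real_of_int k + 1" unfolding k_def by linarith+
    have k2: "real_of_int k * \<Theta> \<le> t" "t < real_of_int k * \<Theta> + \<Theta>"
      using k1 Thpos by (simp_all add: field_simps)
    define t' where "t' = t - real_of_int k * \<Theta>"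
    have t'r: "t' \<in> {0..\<Theta>}" unfolding t'_def using k2 by auto
    have "D t = D (t' + real_of_int k * \<Theta>)" unfolding t'_def by simp
    also have "\<dots> = D t'" by (rule Dper)
    finally show ?thesis using tm t'r unfolding d_def by auto
  qed
  have "T0 v a = \<infinity>" if a: "0 < a" "a < d" for a
  proof (rule T0_inf[of "1/2" "1/2" \<alpha> \<tau>])
    show "\<forall>t>0. ray (1/2) (1/2) \<tau> \<alpha> t \<notin> omega v a t"
    proof (intro allI impI notI)
      fix t :: real assume "0 < t" "ray (1/2) (1/2) \<tau> \<alpha> t \<in> omega v a t"
      then have "\<bar>X t - fst (bdry_point (v * t))\<bar> < a" "\<bar>Y t - snd (bdry_point (v * t))\<bar> < a"
        unfolding ray_eq omega_def ctrl_path_def by auto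
      then have "D t < a" unfolding D_def bdry_closed by simp
      then show False using Dge[of t] a by simp
    qed
  qed (use arange in auto)
  then show ?thesis using dpos by blast
qed


theorem proposition3p4:
  shows "(\<forall>a. 0 < a \<and> a < 1/2 \<longrightarrow>
            (\<forall>v. v > (2 - a) / a \<longrightarrow> T0 v a < \<infinity>) \<and>
            ((\<lambda>v. T0 v a) \<longlongrightarrow> ereal (max (sqrt 2 * (1 - 2 * a)) 0)) at_top)
       \<and> (\<forall>v (p::nat) (q::nat) r. 0 \<le> v \<and> r \<in> \<rat> \<and> v = sqrt (real (p^2 + q^2)) * r \<longrightarrow>
            (\<exists>a0>0. \<forall>a. 0 < a \<and> a < a0 \<longrightarrow> T0 v a = \<infinity>))"
proof (rule conjI)
  show "\<forall>a. 0 < a \<and> a < 1/2 \<longrightarrow>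
            (\<forall>v. v > (2 - a) / a \<longrightarrow> T0 v a < \<infinity>) \<and>
            ((\<lambda>v. T0 v a) \<longlongrightarrow> ereal (max (sqrt 2 * (1 - 2 * a)) 0)) at_top"
    using part1 by blast
  show "\<forall>v (p::nat) (q::nat) r. 0 \<le> v \<and> r \<in> \<rat> \<and> v = sqrt (real (p^2 + q^2)) * r \<longrightarrow>
            (\<exists>a0>0. \<forall>a. 0 < a \<and> a < a0 \<longrightarrow> T0 v a = \<infinity>)"
    using part2 by blast
qed

end
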